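(* Let $1\le p\le\infty$ and $m\in\mathbb N_0$. Let $\varphi\in C_0^k(\mathbb R)$ with $\operatorname{supp}\varphi\subset[0,1]$, $\varphi>0$ on $(0,1)$ and $k>m+1$, and assume that $\varphi^{(k)}$ has only finitely many zeros in $[0,1]$. Then $$\frac{|\varphi^{(r)}(t)\,\varphi^{(\alpha)}(t)|}{|\varphi(t)|^{1/p}}\in L_\infty([0,1])$$ for all $r,\alpha\in\mathbb N_0$ with $r+\alpha\le m$.
   Context: $C_0^k(\mathbb R)$: compactly supported functions whose derivatives up to order $k$ are uniformly continuous. *)

theory Defs
  imports "HOL-Analysis.Analysis"
begin

definition nderiv :: "nat \<Rightarrow> (real \<Rightarrow> real) \<Rightarrow> real \<Rightarrow> real" where
  "nderiv j f = (deriv ^^ j) f"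

definition supp :: "(real \<Rightarrow> real) \<Rightarrow> real set" where
  "supp f = closure {x. f x \<noteq> 0}"

definition C0k :: "nat \<Rightarrow> (real \<Rightarrow> real) set" where
  "C0k k = {f. compact (supp f)
      \<and> (\<forall>j<k. \<forall>x. nderiv j f differentiable (at x))
      \<and> (\<forall>j\<le>k. uniformly_continuous_on UNIV (nderiv j f))}"

definition Linf_on :: "real set \<Rightarrow> (real \<Rightarrow> real) \<Rightarrow> bool" where
  "Linf_on S g \<longleftrightarrow> g \<in> borel_measurable (restrict_space lborel S)
      \<and> (\<exists>C. AE t in lborel. t \<in> S \<longrightarrow> \<bar>g t\<bar> \<le> C)"

end

theory Submission
  imports Defs
begin

lemma pos_prop:
  fixes F :: "nat \<Rightarrow> real \<Rightarrow> real"
  assumes der: "\<And>j x. j < k \<Longrightarrow> (F j has_real_derivative F (Suc j) x) (at x)"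
    and z: "\<And>j. j < k \<Longrightarrow> F j 0 = 0"
    and pk: "\<And>x. 0 < x \<Longrightarrow> x < \<delta> \<Longrightarrow> F k x > 0"
    and j: "j \<le> k" and x: "0 < x" "x < \<delta>"
  shows "F j x > 0"
proof -
  have "\<forall>x. 0<x \<and> x<\<delta> \<longrightarrow> F (k - i) x > 0" if "i \<le> k" for i
    using that
  proof (induction i)
    case 0 then show ?case using pk by simp
  next
    case (Suc i)
    then have IH: "\<forall>x. 0<x \<and> x<\<delta> \<longrightarrow> F (k-i) x > 0" by simp
    have ki: "k - i = Suc (k - Suc i)" using Suc.prems by simp
    show ?case
    proof (intro allI impI)
      fix x :: real assume x: "0<x \<and> x<\<delta>"
      have "\<exists>z>0. z < x \<and> F (k - Suc i) x - F (k-Suc i) 0 = (x - 0) * F (Suc (k - Suc i)) z"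
        apply (rule MVT2)
        using x der[of "k - Suc i"] Suc.prems by auto
      then obtain z where zz: "0<z" "z<x" "F (k - Suc i) x - F (k-Suc i) 0 = (x - 0) * F (Suc (k - Suc i)) z"
        by blast
      have "F (Suc (k - Suc i)) z > 0" using IH ki zz x by fastforce
      then show "F (k - Suc i) x > 0" using zz z[of "k - Suc i"] Suc.prems x by simp
    qed
  qed
  from this[of "k-j"] show ?thesis using j x by simp
qed

lemma Q_ineq:
  fixes F :: "nat \<Rightarrow> real \<Rightarrow> real"
  assumes der: "\<And>j x. j < k \<Longrightarrow> (F j has_real_derivative F (Suc j) x) (at x)"
    and z: "\<And>j. j < k \<Longrightarrow> F j 0 = 0"
    and pos: "\<And>j x. j \<le> k \<Longrightarrow> 0 < x \<Longrightarrow> x < \<delta> \<Longrightarrow> F j x > 0"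
    and i: "Suc (Suc (Suc i)) \<le> k" and t: "0 < t" "t < \<delta>"
  shows "F (Suc i) t ^ 2 \<le> 2 * F i t * F (Suc (Suc i)) t"
proof -
  define H where "H s = 2 * F i s * F (Suc (Suc i)) t - F (Suc i) s ^ 2" for s
  have dH: "(H has_real_derivative (2 * F (Suc i) s * F (Suc (Suc i)) t - 2 * F (Suc i) s * F (Suc (Suc i)) s)) (at s)" for s
  proof -
    have d0: "(F i has_real_derivative F (Suc i) s) (at s)" using i der by simp
    have d1: "(F (Suc i) has_real_derivative F (Suc (Suc i)) s) (at s)" using i der by simp
    show ?thesis unfolding H_def using d0 d1
      by (auto intro!: derivative_eq_intros simp: algebra_simps)
  qed
  have "\<exists>z>0. z < t \<and> H t - H 0 = (t - 0) * (2 * F (Suc i) z * F (Suc (Suc i)) t - 2 * F (Suc i) z * F (Suc (Suc i)) z)"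
    by (rule MVT2) (use t dH in auto)
  then obtain w where w: "0 < w" "w < t" "H t - H 0 = (t - 0) * (2 * F (Suc i) w * F (Suc (Suc i)) t - 2 * F (Suc i) w * F (Suc (Suc i)) w)"
    by blast
  have "\<exists>y>w. y < t \<and> F (Suc (Suc i)) t - F (Suc (Suc i)) w = (t - w) * F (Suc (Suc (Suc i))) y"
    by (rule MVT2) (use w i in \<open>auto intro!: der\<close>)
  then obtain y where y: "w < y" "y < t" "F (Suc (Suc i)) t - F (Suc (Suc i)) w = (t - w) * F (Suc (Suc (Suc i))) y"
    by blast
  have "F (Suc (Suc (Suc i))) y > 0" using pos[of "Suc (Suc (Suc i))" y] y w t i by auto
  then have mono: "F (Suc (Suc i)) w \<le> F (Suc (Suc i)) t" using y by (smt (verit) mult_pos_pos)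
  have p1: "F (Suc i) w > 0" using pos[of "Suc i" w] w t i by auto
  have "0 \<le> 2 * F (Suc i) w * (F (Suc (Suc i)) t - F (Suc (Suc i)) w)"
    using p1 mono by simp
  then have "0 \<le> (t - 0) * (2 * F (Suc i) w * F (Suc (Suc i)) t - 2 * F (Suc i) w * F (Suc (Suc i)) w)"
    using t by (simp add: algebra_simps)
  then have "0 \<le> H t - H 0" using w(3) by linarith
  moreover have "H 0 = 0" unfolding H_def using z[of i] z[of "Suc i"] i by simp
  ultimately show ?thesis unfolding H_def by simp
qed

lemma T_ineq:
  fixes F :: "nat \<Rightarrow> real \<Rightarrow> real"
  assumes Q: "\<And>i. Suc (Suc (Suc i)) \<le> k \<Longrightarrow> F (Suc i) t ^ 2 \<le> 2 * F i t * F (Suc (Suc i)) t"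
    and pos: "\<And>j. j \<le> k \<Longrightarrow> F j t > 0"
  shows "a + d + 2 \<le> k \<Longrightarrow> F (a+1) t * F (a+d) t \<le> 2^d * F a t * F (a+d+1) t"
proof (induction d)
  case 0 then show ?case by simp
next
  case (Suc d)
  let ?F1 = "F (a+1) t" and ?Fd = "F (a+d) t" and ?Fa = "F a t" and ?Fd1 = "F (a+d+1) t" and ?Fd2 = "F (a+d+2) t"
  have A: "?F1 * ?Fd \<le> 2^d * ?Fa * ?Fd1" using Suc by simp
  have QQ: "?Fd1^2 \<le> 2 * ?Fd * ?Fd2" using Q[of "a+d"] Suc.prems by (simp add: add.assoc)
  have pd: "?Fd > 0" "?Fd1 > 0" "?Fa > 0" "?F1 > 0" using pos Suc.prems by auto
  have "(?F1 * ?Fd1) * ?Fd = (?F1 * ?Fd) * ?Fd1" by simp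
  also have "\<dots> \<le> (2^d * ?Fa * ?Fd1) * ?Fd1" using A pd by (intro mult_right_mono) auto
  also have "\<dots> = 2^d * ?Fa * ?Fd1^2" by (simp add: power2_eq_square)
  also have "\<dots> \<le> 2^d * ?Fa * (2 * ?Fd * ?Fd2)" using QQ pd by (intro mult_left_mono) auto
  also have "\<dots> = (2^(Suc d) * ?Fa * ?Fd2) * ?Fd" by simp
  finally have "(?F1 * ?Fd1) * ?Fd \<le> (2^(Suc d) * ?Fa * ?Fd2) * ?Fd" .
  then have "?F1 * ?Fd1 \<le> 2^(Suc d) * ?Fa * ?Fd2" using pd by simp
  then show ?case by (simp add: add.assoc)
qed

lemma S_ineq:
  fixes F :: "nat \<Rightarrow> real \<Rightarrow> real"
  assumes Q: "\<And>i. Suc (Suc (Suc i)) \<le> k \<Longrightarrow> F (Suc i) t ^ 2 \<le> 2 * F i t * F (Suc (Suc i)) t"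
    and pos: "\<And>j. j \<le> k \<Longrightarrow> F j t > 0"
  shows "r + \<alpha> + 2 \<le> k \<Longrightarrow> F r t * F \<alpha> t \<le> 2^(r*\<alpha>) * F 0 t * F (r+\<alpha>) t"
proof (induction r)
  case 0 then show ?case by simp
next
  case (Suc r)
  have IH: "F r t * F \<alpha> t \<le> 2^(r*\<alpha>) * F 0 t * F (r+\<alpha>) t" using Suc by simp
  have T: "F (r+1) t * F (r+\<alpha>) t \<le> 2^\<alpha> * F r t * F (r+\<alpha>+1) t"
    using T_ineq[where F=F and k=k and t=t, OF Q pos, of r \<alpha>] Suc.prems by simp
  have pd: "F r t > 0" "F (Suc r) t > 0" "F 0 t > 0" using pos Suc.prems by auto
  have "(F (Suc r) t * F \<alpha> t) * F r t = F (Suc r) t * (F r t * F \<alpha> t)" by simp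
  also have "\<dots> \<le> F (Suc r) t * (2^(r*\<alpha>) * F 0 t * F (r+\<alpha>) t)" using IH pd by (intro mult_left_mono) auto
  also have "\<dots> = 2^(r*\<alpha>) * F 0 t * (F (r+1) t * F (r+\<alpha>) t)" by simp
  also have "\<dots> \<le> 2^(r*\<alpha>) * F 0 t * (2^\<alpha> * F r t * F (r+\<alpha>+1) t)" using T pd by (intro mult_left_mono) auto
  also have "\<dots> = (2^(Suc r * \<alpha>) * F 0 t * F (Suc r + \<alpha>) t) * F r t" by (simp add: power_add)
  finally show ?case using pd by simp
qed

lemma sign_lemma:
  fixes F :: "nat \<Rightarrow> real \<Rightarrow> real"
  assumes der: "\<And>j x. j < k \<Longrightarrow> (F j has_real_derivative F (Suc j) x) (at x)"
    and z: "\<And>j. j < k \<Longrightarrow> F j 0 = 0"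
    and nz: "\<And>x. 0 < x \<Longrightarrow> x < \<delta> \<Longrightarrow> F k x \<noteq> 0"
    and cont: "continuous_on {0<..<\<delta>} (F k)"
    and p0: "\<And>x. 0 < x \<Longrightarrow> x < \<delta> \<Longrightarrow> F 0 x > 0"
    and x: "0 < x" "x < \<delta>"
  shows "F k x > 0"
proof (rule ccontr)
  assume "\<not> F k x > 0"
  then have x0: "F k x < 0" using nz x by force
  have neg: "F k y < 0" if y: "0 < y" "y < \<delta>" for y
  proof (rule ccontr)
    assume "\<not> F k y < 0"
    then have y0: "F k y > 0" using nz y by force
    show False
    proof (cases "x \<le> y")
      case True
      have "continuous_on {x..y} (F k)" by (rule continuous_on_subset[OF cont]) (use x y in auto)
      then obtain w where "w \<ge> x" "w \<le> y" "F k w = 0" using IVT'[of "F k" x 0 y] x0 y0 True by auto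
      then show False using nz x y by auto
    next
      case False
      have "continuous_on {y..x} (F k)" by (rule continuous_on_subset[OF cont]) (use x y in auto)
      then obtain w where "w \<ge> y" "w \<le> x" "F k w = 0" using IVT2'[of "F k" x 0 y] x0 y0 False by auto
      then show False using nz x y by auto
    qed
  qed
  define G where "G j y = - F j y" for j y
  have "G 0 x > 0"
  proof (rule pos_prop[where F=G and k=k and \<delta>=\<delta>])
    show "(G j has_real_derivative G (Suc j) y) (at y)" if "j < k" for j y
      unfolding G_def using der[OF that] by (auto intro!: derivative_eq_intros)
    show "G j 0 = 0" if "j < k" for j unfolding G_def using z[OF that] by simp
    show "G k y > 0" if "0 < y" "y < \<delta>" for y unfolding G_def using neg[OF that] by simp
  qed (use x in auto)
  then show False using p0[OF x] unfolding G_def by simp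
qed

lemma core_bound:
  fixes F :: "nat \<Rightarrow> real \<Rightarrow> real"
  assumes der: "\<And>j x. j < k \<Longrightarrow> (F j has_real_derivative F (Suc j) x) (at x)"
    and z: "\<And>j. j < k \<Longrightarrow> F j 0 = 0"
    and nz: "\<And>x. 0 < x \<Longrightarrow> x < \<delta> \<Longrightarrow> F k x \<noteq> 0"
    and cont: "continuous_on {0<..<\<delta>} (F k)"
    and p0: "\<And>x. 0 < x \<Longrightarrow> x < \<delta> \<Longrightarrow> F 0 x > 0"
    and rk: "r + \<alpha> + 2 \<le> k" and t: "0 < t" "t < \<delta>"
  shows "\<bar>F r t * F \<alpha> t\<bar> \<le> 2^(r*\<alpha>) * F 0 t * \<bar>F (r+\<alpha>) t\<bar>"
proof -
  have pk: "F k x > 0" if "0 < x" "x < \<delta>" for x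
    by (rule sign_lemma[OF der z nz cont p0]) (use that in auto)
  have pos: "F j x > 0" if "j \<le> k" "0 < x" "x < \<delta>" for j x
    by (rule pos_prop[OF der z pk]) (use that in auto)
  have Q: "F (Suc i) t ^ 2 \<le> 2 * F i t * F (Suc (Suc i)) t" if "Suc (Suc (Suc i)) \<le> k" for i
    by (rule Q_ineq[where F=F and k=k and \<delta>=\<delta>, OF der z pos]) (use that t in auto)
  have S: "F r t * F \<alpha> t \<le> 2^(r*\<alpha>) * F 0 t * F (r+\<alpha>) t"
    by (rule S_ineq[where F=F and k=k and t=t, OF Q]) (use pos t rk in auto)
  have "F r t > 0" "F \<alpha> t > 0" "F (r+\<alpha>) t > 0" using pos rk t by auto
  then show ?thesis using S by simp
qed


theorem corollary4p6:
  fixes p :: ereal and m k :: nat and \<phi> :: "real \<Rightarrow> real"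
  assumes "1 \<le> p"
    and "\<phi> \<in> C0k k"
    and "supp \<phi> \<subseteq> {0..1}"
    and "\<forall>t\<in>{0<..<1}. \<phi> t > 0"
    and "k > m + 1"
    and "finite {t\<in>{0..1}. nderiv k \<phi> t = 0}"
  shows "\<forall>r \<alpha>. r + \<alpha> \<le> m \<longrightarrow>
     Linf_on {0..1} (\<lambda>t. \<bar>nderiv r \<phi> t * nderiv \<alpha> \<phi> t\<bar> / \<bar>\<phi> t\<bar> powr real_of_ereal (1 / p))"
proof (intro allI impI)
  fix r \<alpha> assume r\<alpha>: "r + \<alpha> \<le> m"
  define F where "F j = nderiv j \<phi>" for j
  have dif: "\<And>j x. j<k \<Longrightarrow> F j differentiable (at x)"
    and uc: "\<And>j. j \<le> k \<Longrightarrow> uniformly_continuous_on UNIV (F j)"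
    using assms(2) unfolding C0k_def F_def by auto
  have Fsuc: "F (Suc j) x = deriv (F j) x" for j x by (simp add: F_def nderiv_def)
  have F0: "F 0 = \<phi>" by (simp add: F_def nderiv_def)
  have der: "(F j has_real_derivative F (Suc j) x) (at x)" if "j<k" for j x
  proof -
    have "F j differentiable at x" using dif that by simp
    then have "(F j has_real_derivative deriv (F j) x) (at x)"
      by (simp add: DERIV_deriv_iff_real_differentiable)
    then show ?thesis by (simp add: Fsuc)
  qed
  have cont: "continuous_on UNIV (F j)" if "j \<le> k" for j
    using uc[OF that] by (rule uniformly_continuous_imp_continuous)
  have phi0: "\<phi> x = 0" if "x \<notin> {0..1}" for x
  proof -
    have "x \<notin> supp \<phi>" using assms(3) that by auto
    then show ?thesis unfolding supp_def using closure_subset[of "{x. \<phi> x \<noteq> 0}"] by auto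
  qed
  have out: "F j x = 0" if "x < 0 \<or> x > 1" for j x
    using that
  proof (induction j arbitrary: x)
    case 0 then have "x \<notin> {0..1}" by auto
    then show ?case by (simp add: F0 phi0)
  next
    case (Suc j)
    define U where "U = (if x < 0 then {..<0} else {(1::real)<..})"
    have U: "open U" "x \<in> U" using Suc.prems by (auto simp: U_def)
    have U0: "\<And>y. y \<in> U \<Longrightarrow> F j y = 0" using Suc.IH Suc.prems by (auto simp: U_def split: if_splits)
    have "((\<lambda>_. 0::real) has_real_derivative 0) (at x)" by simp
    then have "(F j has_real_derivative 0) (at x)"
      by (rule has_field_derivative_transform_within_open[OF _ U]) (use U0 in auto)
    then show ?case by (simp add: Fsuc DERIV_imp_deriv)
  qed
  have end0: "F j 0 = 0" if "j \<le> k" for j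
  proof -
    have cl: "closed {x \<in> UNIV. F j x = 0}"
      by (rule continuous_closed_preimage_constant[OF cont[OF that]]) simp
    have "{..<0} \<subseteq> {x \<in> UNIV. F j x = 0}" using out by auto
    then have "closure {..<0} \<subseteq> {x \<in> UNIV. F j x = 0}" using cl by (rule closure_minimal)
    then show ?thesis by auto
  qed
  have end1: "F j 1 = 0" if "j \<le> k" for j
  proof -
    have cl: "closed {x \<in> UNIV. F j x = 0}"
      by (rule continuous_closed_preimage_constant[OF cont[OF that]]) simp
    have "{1<..} \<subseteq> {x \<in> UNIV. F j x = 0}" using out by auto
    then have "closure {1<..} \<subseteq> {x \<in> UNIV. F j x = 0}" using cl by (rule closure_minimal)
    then show ?thesis by auto
  qed
  have bnd: "\<exists>B. \<forall>x. \<bar>F j x\<bar> \<le> B" if "j \<le> k" for j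
  proof -
    have "compact (F j ` {0..1})"
      by (rule compact_continuous_image[OF continuous_on_subset[OF cont[OF that]]]) auto
    then have "bounded (F j ` {0..1})" by (rule compact_imp_bounded)
    then obtain B where B: "\<And>y. y \<in> F j ` {0..1} \<Longrightarrow> norm y \<le> B" by (auto simp: bounded_iff)
    have "\<bar>F j x\<bar> \<le> B" for x
    proof (cases "x \<in> {0..1}")
      case True then show ?thesis using B by auto
    next
      case False
      have "0 \<le> B" using B[of "F j 0"] by auto
      then show ?thesis using out[of x j] False by auto
    qed
    then show ?thesis by blast
  qed
  have rk: "r + \<alpha> + 2 \<le> k" using r\<alpha> assms(5) by simp
  obtain Br where Br: "\<And>x. \<bar>F r x\<bar> \<le> Br" using bnd[of r] rk by auto
  obtain Ba where Ba: "\<And>x. \<bar>F \<alpha> x\<bar> \<le> Ba" using bnd[of \<alpha>] rk by auto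
  obtain Bs where Bs: "\<And>x. \<bar>F (r+\<alpha>) x\<bar> \<le> Bs" using bnd[of "r+\<alpha>"] rk by auto
  have Br0: "Br \<ge> 0" using Br[of 0] by linarith
  have Ba0: "Ba \<ge> 0" using Ba[of 0] by linarith
  have Bs0: "Bs \<ge> 0" using Bs[of 0] by linarith
  define Z where "Z = {t\<in>{0..1}. F k t = 0}"
  have finZ: "finite Z" using assms(6) by (simp add: Z_def F_def)
  define D where "D = insert (1/2::real) ({t\<in>Z. t>0} \<union> (\<lambda>t. 1-t) ` {t\<in>Z. t<1})"
  define \<delta> where "\<delta> = Min D"
  have finD: "finite D" using finZ by (simp add: D_def)
  have Dpos: "\<And>d. d \<in> D \<Longrightarrow> d > 0" by (auto simp: D_def)
  have \<delta>in: "\<delta> \<in> D" unfolding \<delta>_def using finD by (intro Min_in) (auto simp: D_def)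
  have \<delta>pos: "\<delta> > 0" using Dpos[OF \<delta>in] .
  have \<delta>le: "\<delta> \<le> 1/2" unfolding \<delta>_def using finD by (intro Min_le) (auto simp: D_def)
  have \<delta>D: "\<And>d. d \<in> D \<Longrightarrow> \<delta> \<le> d" unfolding \<delta>_def using finD by (intro Min_le) auto
  have nz0: "F k x \<noteq> 0" if "0 < x" "x < \<delta>" for x
  proof
    assume "F k x = 0"
    then have "x \<in> D" using that \<delta>le by (auto simp: D_def Z_def)
    then show False using \<delta>D that by fastforce
  qed
  have nz1: "F k (1 - x) \<noteq> 0" if "0 < x" "x < \<delta>" for x
  proof
    assume "F k (1 - x) = 0"
    then have "1 - x \<in> {t\<in>Z. t<1}" using that \<delta>le by (auto simp: Z_def)
    then have "x \<in> D" unfolding D_def by (intro insertI2 UnI2 image_eqI[where x="1-x"]) auto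
    then show False using \<delta>D that by fastforce
  qed
  have phipos: "\<phi> x > 0" if "0 < x" "x < 1" for x using assms(4) that by auto
  have left: "\<bar>F r t * F \<alpha> t\<bar> \<le> 2^(r*\<alpha>) * Bs * \<phi> t" if t: "0 < t" "t < \<delta>" for t
  proof -
    have "\<bar>F r t * F \<alpha> t\<bar> \<le> 2^(r*\<alpha>) * F 0 t * \<bar>F (r+\<alpha>) t\<bar>"
    proof (rule core_bound[where k=k and \<delta>=\<delta>])
      show "continuous_on {0<..<\<delta>} (F k)" using cont[of k] continuous_on_subset by blast
      show "\<And>x. 0 < x \<Longrightarrow> x < \<delta> \<Longrightarrow> F 0 x > 0" using phipos \<delta>le F0 by auto
    qed (use der end0 nz0 rk t in auto)
    also have "\<dots> \<le> 2^(r*\<alpha>) * F 0 t * Bs"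
      using Bs phipos[of t] t \<delta>le F0 by (intro mult_left_mono) auto
    finally show ?thesis using F0 by (simp add: algebra_simps)
  qed
  define G where "G j y = (-1)^j * F j (1 - y)" for j y
  have right: "\<bar>F r s * F \<alpha> s\<bar> \<le> 2^(r*\<alpha>) * Bs * \<phi> s" if s: "1 - \<delta> < s" "s < 1" for s
  proof -
    define y where "y = 1 - s"
    have y: "0 < y" "y < \<delta>" using s by (auto simp: y_def)
    have derG: "(G j has_real_derivative G (Suc j) x) (at x)" if "j < k" for j x
    proof -
      have "((\<lambda>y. F j (1-y)) has_real_derivative F (Suc j) (1-x) * (-1)) (at x)"
        by (rule DERIV_chain2[OF der[OF that]]) (auto intro!: derivative_eq_intros)
      then have "(G j has_real_derivative (-1)^j * (F (Suc j) (1-x) * (-1))) (at x)"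
        unfolding G_def by (rule DERIV_cmult)
      then show ?thesis by (simp add: G_def)
    qed
    have "\<bar>G r y * G \<alpha> y\<bar> \<le> 2^(r*\<alpha>) * G 0 y * \<bar>G (r+\<alpha>) y\<bar>"
    proof (rule core_bound[where k=k and \<delta>=\<delta>])
      have "continuous_on UNIV (\<lambda>y. (-1)^k * F k (1 - y))"
        by (intro continuous_intros continuous_on_compose2[OF cont[of k]]) auto
      then show "continuous_on {0<..<\<delta>} (G k)" unfolding G_def using continuous_on_subset by blast
      show "\<And>x. 0 < x \<Longrightarrow> x < \<delta> \<Longrightarrow> G 0 x > 0" using phipos \<delta>le F0 by (auto simp: G_def)
      show "\<And>j. j < k \<Longrightarrow> G j 0 = 0" using end1 by (simp add: G_def)
      show "\<And>x. 0 < x \<Longrightarrow> x < \<delta> \<Longrightarrow> G k x \<noteq> 0" using nz1 by (simp add: G_def)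
    qed (use derG rk y in auto)
    also have "\<dots> \<le> 2^(r*\<alpha>) * G 0 y * Bs"
      using Bs[of s] phipos[of s] s \<delta>le F0
      by (intro mult_left_mono) (auto simp: G_def y_def abs_mult)
    finally show ?thesis using F0 by (simp add: G_def y_def abs_mult algebra_simps)
  qed
  have Snz: "{\<delta>..1-\<delta>} \<noteq> {}" using \<delta>le by auto
  obtain x0 where x0: "x0 \<in> {\<delta>..1-\<delta>}" "\<And>y. y \<in> {\<delta>..1-\<delta>} \<Longrightarrow> \<phi> x0 \<le> \<phi> y"
    using continuous_attains_inf[OF compact_Icc Snz continuous_on_subset[OF cont[of 0]]] F0 by auto
  define c where "c = \<phi> x0"
  have c0: "c > 0" using x0(1) \<delta>pos \<delta>le phipos[of x0] by (auto simp: c_def)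
  define Dc where "Dc = 2^(r*\<alpha>) * Bs + Br * Ba / c"
  have all: "\<bar>F r t * F \<alpha> t\<bar> \<le> Dc * \<phi> t" if t: "0 < t" "t < 1" for t
  proof -
    have p: "\<phi> t > 0" using phipos t by auto
    have e1: "2^(r*\<alpha>) * Bs * \<phi> t \<le> Dc * \<phi> t"
      using p Br0 Ba0 c0 by (intro mult_right_mono) (auto simp: Dc_def)
    show ?thesis
    proof (cases "t < \<delta>")
      case True then show ?thesis using left[OF t(1) True] e1 by linarith
    next
      case False
      show ?thesis
      proof (cases "t > 1 - \<delta>")
        case True then show ?thesis using right[OF True t(2)] e1 by linarith
      next
        case False2: False
        have tin: "t \<in> {\<delta>..1-\<delta>}" using False False2 by auto
        have "\<bar>F r t * F \<alpha> t\<bar> \<le> Br * Ba" unfolding abs_mult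
          using Br Ba Br0 Ba0 by (intro mult_mono) auto
        also have "\<dots> = (Br * Ba / c) * c" using c0 by simp
        also have "\<dots> \<le> (Br * Ba / c) * \<phi> t" using x0(2)[OF tin] Br0 Ba0 c0
          by (intro mult_left_mono) (auto simp: c_def)
        also have "\<dots> \<le> Dc * \<phi> t" using p Bs0 by (intro mult_right_mono) (auto simp: Dc_def)
        finally show ?thesis .
      qed
    qed
  qed
  define s where "s = real_of_ereal (1 / p)"
  have s01: "0 \<le> s \<and> s \<le> 1"
  proof (cases p)
    case (real q)
    then have q: "q \<ge> 1" using assms(1) by simp
    then have "1 / p = ereal (1/q)" using real by (simp add: divide_ereal_def one_ereal_def inverse_eq_divide)
    then show ?thesis using q by (simp add: s_def)
  next
    case PInf then show ?thesis by (simp add: s_def)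
  next
    case MInf then show ?thesis using assms(1) by simp
  qed
  have Dc0: "Dc \<ge> 0" using Bs0 Br0 Ba0 c0 by (simp add: Dc_def)
  define g where "g t = \<bar>F r t * F \<alpha> t\<bar> / \<bar>\<phi> t\<bar> powr s" for t
  have gb: "g t \<le> Br * Ba + Dc" if t: "t \<in> {0..1}" for t
  proof (cases "\<phi> t = 0")
    case True then show ?thesis using Dc0 Br0 Ba0 by (simp add: g_def)
  next
    case False
    then have t01: "0 < t" "t < 1" using t end0[of 0] end1[of 0] F0
      by (auto simp: less_le)
    have p: "\<phi> t > 0" using phipos t01 by auto
    have nn: "\<bar>F r t * F \<alpha> t\<bar> \<le> Br * Ba" unfolding abs_mult
      using Br Ba Br0 Ba0 by (intro mult_mono) auto
    show ?thesis
    proof (cases "\<phi> t \<ge> 1")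
      case True
      have "1 \<le> \<bar>\<phi> t\<bar> powr s" using True s01 by (intro ge_one_powr_ge_zero) auto
      then have "g t \<le> \<bar>F r t * F \<alpha> t\<bar>" unfolding g_def
        using divide_left_mono[of 1 "\<bar>\<phi> t\<bar> powr s" "\<bar>F r t * F \<alpha> t\<bar>"] using p by simp
      then show ?thesis using nn Dc0 by linarith
    next
      case False
      have "\<phi> t powr 1 \<le> \<phi> t powr s" using False p s01 by (intro powr_mono') auto
      then have le: "\<phi> t \<le> \<bar>\<phi> t\<bar> powr s" using p by simp
      have "g t \<le> \<bar>F r t * F \<alpha> t\<bar> / \<phi> t" unfolding g_def
        using le p by (intro divide_left_mono) auto
      also have "\<dots> \<le> Dc" using all[OF t01] p by (simp add: pos_divide_le_eq)
      finally show ?thesis using Br0 Ba0 by (smt (verit) mult_nonneg_nonneg)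
    qed
  qed
  have mr: "F r \<in> borel_measurable borel" using cont[of r] rk by (auto intro: borel_measurable_continuous_onI)
  have ma: "F \<alpha> \<in> borel_measurable borel" using cont[of \<alpha>] rk by (auto intro: borel_measurable_continuous_onI)
  have mp: "\<phi> \<in> borel_measurable borel"
    using cont[of 0] F0 by (auto intro: borel_measurable_continuous_onI)
  have mps: "(\<lambda>x. \<bar>\<phi> x\<bar> powr s) \<in> borel_measurable borel"
    by (rule measurable_abs_powr[OF mp])
  have "(\<lambda>x. F r x * F \<alpha> x) \<in> borel_measurable borel" using mr ma by (rule borel_measurable_times)
  then have "(\<lambda>x. \<bar>F r x * F \<alpha> x\<bar>) \<in> borel_measurable borel" by (rule borel_measurable_abs)
  then have "g \<in> borel_measurable borel" unfolding g_def using mps by (rule borel_measurable_divide)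
  then have gm: "g \<in> borel_measurable lborel" by (simp add: measurable_lborel2)
  have "Linf_on {0..1} g"
    unfolding Linf_on_def
  proof
    show "g \<in> borel_measurable (restrict_space lborel {0..1})"
      by (rule measurable_restrict_space1[OF gm])
    show "\<exists>C. AE t in lborel. t \<in> {0..1} \<longrightarrow> \<bar>g t\<bar> \<le> C"
    proof (intro exI AE_I2 impI)
      fix t :: real assume t: "t \<in> {0..1}"
      have "g t \<ge> 0" by (simp add: g_def)
      then show "\<bar>g t\<bar> \<le> Br * Ba + Dc" using gb[OF t] by simp
    qed
  qed
  then show "Linf_on {0..1} (\<lambda>t. \<bar>nderiv r \<phi> t * nderiv \<alpha> \<phi> t\<bar> / \<bar>\<phi> t\<bar> powr real_of_ereal (1 / p))"
    unfolding g_def s_def F_def by simp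
qed

end
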